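(* Let $H\in\mathbb{R}^{n\times n}$ and $M\in\mathbb{R}^{m\times m}$ be symmetric positive semidefinite and $A\in\mathbb{R}^{m\times n}$. Let $l$ be an index and $\mathcal{B},\mathcal{N}$ index sets such that $\mathcal{B}$, $\{l\}$, $\mathcal{N}$ are pairwise disjoint with union $\{1,\dots,n\}$. Consider vectors $(\Delta x,\Delta y,\Delta z)\in\mathbb{R}^n\times\mathbb{R}^m\times\mathbb{R}^n$ satisfying \[ H\Delta x-A^T\Delta y-\Delta z=0,\quad A\Delta x+M\Delta y=0,\quad \Delta x_{\mathcal{N}}=0,\quad \Delta z_{\mathcal{B}}=0. \tag{$*$} \] Assume $K_{\mathcal{B}}$ is nonsingular and let $\Delta x_l$ be a given nonnegative scalar. 1. If $\Delta x_l=0$, then the only solution of $( * )$ with this value of $\Delta x_l$ is zero, i.e., $\Delta x_{\mathcal{B}}=0$, $\Delta y=0$, $\Delta z_l=0$, $\Delta z_{\mathcal{N}}=0$. 2. If $\Delta x_l>0$, then the quantities $\Delta x_{\mathcal{B}},\Delta y,\Delta z_l,\Delta z_{\mathcal{N}}$ of a solution of $( * )$ with this value of $\Delta x_l$ are unique and satisfy \[ K_{\mathcal{B}}\begin{pmatrix}\Delta x_{\mathcal{B}}\\ -\Delta y\end{pmatrix}=-\begin{pmatrix}h_{\mathcal{B}l}\\ a_l\end{pmatrix}\Delta x_l,\quad \Delta z_l=h_{ll}\Delta x_l+h_{\mathcal{B}l}^T\Delta x_{\mathcal{B}}-a_l^T\Delta y,\quad \Delta z_{\mathcal{N}}=h_{\mathcal{N}l}\Delta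 x_l+H_{\mathcal{B}\mathcal{N}}^T\Delta x_{\mathcal{B}}-A_{\mathcal{N}}^T\Delta y. \] Moreover, either (i) $K_l$ is nonsingular and $\Delta z_l>0$, or (ii) $K_l$ is singular and $\Delta z_l=0$, in which case $\Delta y=0$, $\Delta z_{\mathcal{N}}=0$, and the zero eigenvalue of $K_l$ has multiplicity one with corresponding eigenvector $(\Delta x_l,\Delta x_{\mathcal{B}},0)$.
   Context: For index sets $S,T$: $w_S$ is the subvector of $w$ indexed by $S$; $H_{ST}$ is the submatrix of $H$ with rows in $S$ and columns in $T$; $A_S$ is the matrix of columns of $A$ indexed by $S$; $a_l$ is the $l$th column of $A$; $h_{ll}$ is the $l$th diagonal entry of $H$; $h_{Sl}$ is the column vector of entries $h_{il}$, $i\in S$. Define \[ K_{\mathcal{B}}=\begin{pmatrix}H_{\mathcal{B}\mathcal{B}}&A_{\mathcal{B}}^T\\ A_{\mathcal{B}}&-M\end{pmatrix},\qquad K_l=\begin{pmatrix}h_{ll}&h_{\mathcal{B}l}^T&a_l^T\\ h_{\mathcal{B}l}&H_{\mathcal{B}\mathcal{B}}&A_{\mathcal{B}}^T\\ a_l&A_{\mathcal{B}}&-M\end{pmatrix}. \] *)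

theory Defs
  imports "Jordan_Normal_Form.DL_Submatrix" "Jordan_Normal_Form.Char_Poly"
begin

(* Index sets are 0-based subsets of {0..<n}; submatrices / subvectors list the
   selected indices in increasing order (via JNF's pick), as in the library's submatrix. *)

definition subvec :: "'a vec \<Rightarrow> nat set \<Rightarrow> 'a vec" where
  "subvec v S = vec (card {i. i < dim_vec v \<and> i \<in> S}) (\<lambda>i. v $ pick S i)"

definition cols_sub :: "'a mat \<Rightarrow> nat set \<Rightarrow> 'a mat" where
  "cols_sub A S = submatrix A UNIV S"

definition psd :: "real mat \<Rightarrow> bool" where
  "psd X \<longleftrightarrow> X \<in> carrier_mat (dim_row X) (dim_row X) \<and>
     (\<forall>v \<in> carrier_vec (dim_row X). v \<bullet> (X *\<^sub>v v) \<ge> 0)"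

definition KB :: "real mat \<Rightarrow> real mat \<Rightarrow> real mat \<Rightarrow> nat set \<Rightarrow> real mat" where
  "KB H A M B = four_block_mat (submatrix H B B) (transpose_mat (cols_sub A B))
                               (cols_sub A B) (- M)"

definition KB_col :: "real mat \<Rightarrow> real mat \<Rightarrow> nat set \<Rightarrow> nat \<Rightarrow> real vec" where
  "KB_col H A B l = subvec (col H l) B @\<^sub>v col A l"

(* K_l = [[h_ll, h_Bl^T, a_l^T], [h_Bl, H_BB, A_B^T], [a_l, A_B, -M]] *)
definition Kl :: "real mat \<Rightarrow> real mat \<Rightarrow> real mat \<Rightarrow> nat set \<Rightarrow> nat \<Rightarrow> real mat" where
  "Kl H A M B l = (let c = KB_col H A B l; k = dim_vec c in
     four_block_mat (mat 1 1 (\<lambda>_. H $$ (l, l))) (mat_of_rows k [c])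
                    (mat_of_cols k [c]) (KB H A M B))"

definition sys :: "real mat \<Rightarrow> real mat \<Rightarrow> real mat \<Rightarrow> nat set \<Rightarrow> nat set
                   \<Rightarrow> real vec \<Rightarrow> real vec \<Rightarrow> real vec \<Rightarrow> bool" where
  "sys H A M B N dx dy dz \<longleftrightarrow>
     dx \<in> carrier_vec (dim_col H) \<and> dy \<in> carrier_vec (dim_row M) \<and> dz \<in> carrier_vec (dim_col H) \<and>
     H *\<^sub>v dx - transpose_mat A *\<^sub>v dy - dz = 0\<^sub>v (dim_col H) \<and>
     A *\<^sub>v dx + M *\<^sub>v dy = 0\<^sub>v (dim_row M) \<and>
     (\<forall>i\<in>N. dx $ i = 0) \<and> (\<forall>i\<in>B. dz $ i = 0)"

end

theory Submission
  imports Defs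
begin


lemma set_lt_B: "B \<subseteq> {0..<n} \<Longrightarrow> {i. i < n \<and> i \<in> B} = B" by auto

lemma pick_bij:
  assumes "finite B"
  shows "bij_betw (pick B) {..<card B} B"
proof (rule bij_betw_imageI)
  show "inj_on (pick B) {..<card B}"
  proof (rule inj_onI, rule ccontr)
    fix x y assume xy: "x \<in> {..<card B}" "y \<in> {..<card B}" "pick B x = pick B y" "x \<noteq> y"
    show False
    proof (cases "x < y")
      case True thus False using pick_mono[of y B x] xy by auto
    next
      case False hence "y < x" using xy by auto
      thus False using pick_mono[of x B y] xy by auto
    qed
  qed
  show "pick B ` {..<card B} = B"
  proof
    show "pick B ` {..<card B} \<subseteq> B" using pick_in_set by auto
    show "B \<subseteq> pick B ` {..<card B}"
    proof
      fix i assume i: "i \<in> B"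
      have "{a\<in>B. a < i} \<subset> B" using i by auto
      hence "card {a\<in>B. a < i} < card B" using assms psubset_card_mono by blast
      thus "i \<in> pick B ` {..<card B}" by (intro image_eqI[of _ _ "card {a\<in>B. a < i}"]) (simp_all add: pick_card_in_set[OF i])
    qed
  qed
qed

lemma sum_split:
  fixes f :: "nat \<Rightarrow> real"
  assumes idx: "l < n" "l \<notin> B" "l \<notin> N" "B \<inter> N = {}" "B \<union> {l} \<union> N = {0..<n}"
    and z: "\<forall>i\<in>N. f i = 0"
  shows "(\<Sum>i<n. f i) = f l + (\<Sum>q<card B. f (pick B q))"
proof -
  have fin: "finite B" "finite N" using idx(5) by (metis finite_Un finite_atLeastLessThan)+
  have e: "{..<n} = insert l (B \<union> N)" using idx by auto
  have "(\<Sum>i<n. f i) = f l + (\<Sum>i\<in>B \<union> N. f i)" unfolding e using idx fin by (subst sum.insert) auto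
  also have "(\<Sum>i\<in>B \<union> N. f i) = (\<Sum>i\<in>B. f i) + (\<Sum>i\<in>N. f i)"
    using fin idx by (simp add: sum.union_disjoint)
  also have "(\<Sum>i\<in>N. f i) = 0" using z by simp
  also have "(\<Sum>i\<in>B. f i) = (\<Sum>q<card B. f (pick B q))"
    using sum.reindex_bij_betw[OF pick_bij[OF fin(1)], of f] by simp
  finally show ?thesis by simp
qed


lemma neg_aux: assumes a: "(p::real) > 0" "q \<ge> 0" shows "2 * (- p / (q + 1)) * p + (- p / (q + 1)) * (- p / (q + 1)) * q < 0"
proof -
  define s where "s = - p / (q + 1)"
  have e: "s * (q+1) = -p" unfolding s_def using a by simp
  have "(q+1)*(q+1)*(2*s*p + s*s*q) = 2*p*(q+1)*(s*(q+1)) + q*(s*(q+1))*(s*(q+1))" by (simp add: algebra_simps)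
  also have "\<dots> = p*p*(-q-2)" unfolding e by (simp add: algebra_simps)
  also have "\<dots> < 0" using a by (intro mult_pos_neg) auto
  finally have "(q+1)*(q+1)*(2*s*p + s*s*q) < 0" .
  moreover have "(q+1)*(q+1) > 0" using a by (intro mult_pos_pos) auto
  ultimately have "2*s*p + s*s*q < 0" by (simp add: mult_less_0_iff)
  thus ?thesis unfolding s_def .
qed

lemma sq_vec: "(u::real vec) \<bullet>c u = u \<bullet> u"
  by (simp add: conjugate_vec_def conjugate_real_def)

lemma psd_zero:
  fixes X :: "real mat"
  assumes X: "X \<in> carrier_mat n n" "X\<^sup>T = X" "psd X" and v: "v \<in> carrier_vec n"
    and z: "v \<bullet> (X *\<^sub>v v) = 0"
  shows "X *\<^sub>v v = 0\<^sub>v n"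
proof -
  define u where "u = X *\<^sub>v v"
  have u: "u \<in> carrier_vec n" using X v unfolding u_def by auto
  have pos: "\<And>w. w \<in> carrier_vec n \<Longrightarrow> w \<bullet> (X *\<^sub>v w) \<ge> 0" using X unfolding psd_def by auto
  define p where "p = u \<bullet> u"
  define q where "q = u \<bullet> (X *\<^sub>v u)"
  have q0: "q \<ge> 0" using pos[OF u] unfolding q_def .
  have sym: "v \<bullet> (X *\<^sub>v u) = u \<bullet> (X *\<^sub>v v)"
  proof -
    have "v \<bullet> (X *\<^sub>v u) = (X *\<^sub>v v) \<bullet> u" using transpose_vec_mult_scalar[OF X(1) u v] X(2) by simp
    also have "\<dots> = u \<bullet> (X *\<^sub>v v)" by (rule comm_scalar_prod[of _ n], insert X v u, auto)
    finally show ?thesis .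
  qed
  have Xv: "X *\<^sub>v v = u" unfolding u_def ..
  have Xu: "X *\<^sub>v u \<in> carrier_vec n" using X u by auto
  have expand: "\<And>s. (v + s \<cdot>\<^sub>v u) \<bullet> (X *\<^sub>v (v + s \<cdot>\<^sub>v u)) = 2 * s * p + s * s * q"
  proof -
    fix s
    have su: "s \<cdot>\<^sub>v u \<in> carrier_vec n" using u by simp
    have "X *\<^sub>v (v + s \<cdot>\<^sub>v u) = X *\<^sub>v v + s \<cdot>\<^sub>v (X *\<^sub>v u)"
      using mult_add_distrib_mat_vec[OF X(1) v su] mult_mat_vec[OF X(1) u] by simp
    also have "\<dots> = u + s \<cdot>\<^sub>v (X *\<^sub>v u)" using Xv by simp
    finally have e1: "X *\<^sub>v (v + s \<cdot>\<^sub>v u) = u + s \<cdot>\<^sub>v (X *\<^sub>v u)" .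
    have sXu: "s \<cdot>\<^sub>v (X *\<^sub>v u) \<in> carrier_vec n" using Xu by simp
    have "(v + s \<cdot>\<^sub>v u) \<bullet> (u + s \<cdot>\<^sub>v (X *\<^sub>v u))
        = v \<bullet> (u + s \<cdot>\<^sub>v (X *\<^sub>v u)) + (s \<cdot>\<^sub>v u) \<bullet> (u + s \<cdot>\<^sub>v (X *\<^sub>v u))"
      by (rule add_scalar_prod_distrib[OF v su], insert u sXu, simp)
    also have "v \<bullet> (u + s \<cdot>\<^sub>v (X *\<^sub>v u)) = v \<bullet> u + v \<bullet> (s \<cdot>\<^sub>v (X *\<^sub>v u))"
      by (rule scalar_prod_add_distrib[OF v u sXu])
    also have "(s \<cdot>\<^sub>v u) \<bullet> (u + s \<cdot>\<^sub>v (X *\<^sub>v u)) = (s \<cdot>\<^sub>v u) \<bullet> u + (s \<cdot>\<^sub>v u) \<bullet> (s \<cdot>\<^sub>v (X *\<^sub>v u))"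
      by (rule scalar_prod_add_distrib[OF su u sXu])
    also have "v \<bullet> (s \<cdot>\<^sub>v (X *\<^sub>v u)) = s * (v \<bullet> (X *\<^sub>v u))"
      by (rule scalar_prod_smult_distrib[OF v Xu])
    also have "(s \<cdot>\<^sub>v u) \<bullet> u = s * (u \<bullet> u)" by (rule smult_scalar_prod_distrib[OF u u])
    also have "(s \<cdot>\<^sub>v u) \<bullet> (s \<cdot>\<^sub>v (X *\<^sub>v u)) = s * (s * (u \<bullet> (X *\<^sub>v u)))"
      using smult_scalar_prod_distrib[OF u sXu] scalar_prod_smult_distrib[OF u Xu] by simp
    also have "v \<bullet> u = 0" using z Xv by simp
    also have "v \<bullet> (X *\<^sub>v u) = p" using sym Xv unfolding p_def by simp
    finally show "?thesis s" unfolding e1 p_def q_def by (simp add: algebra_simps)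
  qed
  have "p = 0"
  proof (rule ccontr)
    assume "p \<noteq> 0"
    define s where "s = - p / (q + 1)"
    have "2 * s * p + s * s * q \<ge> 0" using pos[of "v + s \<cdot>\<^sub>v u"] u v expand by auto
    moreover have "p > 0" using \<open>p \<noteq> 0\<close> conjugate_square_ge_0_vec[of u] unfolding p_def sq_vec by simp
    hence "2 * s * p + s * s * q < 0" unfolding s_def using neg_aux q0 by blast
    ultimately show False by simp
  qed
  hence "u = 0\<^sub>v n" unfolding p_def using u conjugate_square_eq_0_vec[OF u] sq_vec by simp
  thus ?thesis using Xv by simp
qed


lemma mult_vec_sum:
  assumes "i < dim_row Y" "dim_vec w = dim_col Y"
  shows "(Y *\<^sub>v w) $ i = (\<Sum>j<dim_col Y. Y $$ (i,j) * w $ j)"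
  using assms by (simp add: scalar_prod_def lessThan_atLeast0)

lemma card_UNIV_lt[simp]: "card {i. i < (m::nat) \<and> i \<in> UNIV} = m" by simp

lemma subvec_index: "i < card {j. j < dim_vec v \<and> j \<in> S} \<Longrightarrow> subvec v S $ i = v $ pick S i"
  unfolding subvec_def by simp

lemma dim_subvec[simp]: "dim_vec (subvec v S) = card {j. j < dim_vec v \<and> j \<in> S}"
  unfolding subvec_def by simp

lemma core:
  fixes H M A :: "real mat" and n m l :: nat and B N :: "nat set"
  assumes H: "H \<in> carrier_mat n n"
    and M: "M \<in> carrier_mat m m"
    and A: "A \<in> carrier_mat m n"
    and idx: "l < n" "l \<notin> B" "l \<notin> N" "B \<inter> N = {}" "B \<union> {l} \<union> N = {0..<n}"
    and S: "sys H A M B N dx dy dz"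
  shows "KB H A M B *\<^sub>v (subvec dx B @\<^sub>v (- dy)) = - (dx $ l \<cdot>\<^sub>v KB_col H A B l)"
    and "dz = H *\<^sub>v dx - transpose_mat A *\<^sub>v dy"
    and "\<And>i. i < n \<Longrightarrow> dz $ i = H $$ (i, l) * dx $ l + (\<Sum>q<card B. H $$ (i, pick B q) * dx $ pick B q)
                   - (\<Sum>r<m. A $$ (r, i) * dy $ r)"
proof -
  define k where "k = card B"
  define t where "t = dx $ l"
  have Bsub: "B \<subseteq> {0..<n}" "N \<subseteq> {0..<n}" using idx by auto
  have cB: "{i. i < n \<and> i \<in> B} = B" "{i. i < n \<and> i \<in> N} = N" using Bsub by auto
  have finB: "finite B" using Bsub finite_subset by blast
  have pickB: "\<And>q. q < k \<Longrightarrow> pick B q \<in> B \<and> pick B q < n"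
  proof -
    fix q assume "q < k" hence "pick B q \<in> B" using pick_in_set[of q B] unfolding k_def by auto
    thus "pick B q \<in> B \<and> pick B q < n" using Bsub by auto
  qed
  have dx: "dx \<in> carrier_vec n" and dy: "dy \<in> carrier_vec m" and dz: "dz \<in> carrier_vec n"
    using S H M unfolding sys_def by auto
  have eq1: "H *\<^sub>v dx - transpose_mat A *\<^sub>v dy - dz = 0\<^sub>v n"
    and eq2: "A *\<^sub>v dx + M *\<^sub>v dy = 0\<^sub>v m"
    and xN: "\<forall>i\<in>N. dx $ i = 0" and zB: "\<forall>i\<in>B. dz $ i = 0"
    using S H M unfolding sys_def by auto
  have dHdx: "\<And>i. i < n \<Longrightarrow> (H *\<^sub>v dx) $ i = H $$ (i,l) * t
       + (\<Sum>q<k. H $$ (i, pick B q) * dx $ pick B q)"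
  proof -
    fix i assume i: "i < n"
    have "(H *\<^sub>v dx) $ i = (\<Sum>j<n. H $$ (i,j) * dx $ j)" using mult_vec_sum[of i H dx] H dx i by simp
    also have "\<dots> = H $$ (i,l) * dx $ l + (\<Sum>q<card B. H $$ (i, pick B q) * dx $ pick B q)"
      by (rule sum_split[OF idx], insert xN, auto)
    finally show "?thesis i" unfolding t_def k_def .
  qed
  have dAdx: "\<And>r. r < m \<Longrightarrow> (A *\<^sub>v dx) $ r = A $$ (r,l) * t
       + (\<Sum>q<k. A $$ (r, pick B q) * dx $ pick B q)"
  proof -
    fix r assume r: "r < m"
    have "(A *\<^sub>v dx) $ r = (\<Sum>j<n. A $$ (r,j) * dx $ j)" using mult_vec_sum[of r A dx] A dx r by simp
    also have "\<dots> = A $$ (r,l) * dx $ l + (\<Sum>q<card B. A $$ (r, pick B q) * dx $ pick B q)"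
      by (rule sum_split[OF idx], insert xN, auto)
    finally show "?thesis r" unfolding t_def k_def .
  qed
  have dATdy: "\<And>i. i < n \<Longrightarrow> (transpose_mat A *\<^sub>v dy) $ i = (\<Sum>r<m. A $$ (r, i) * dy $ r)"
    using mult_vec_sum[of _ "transpose_mat A" dy] A dy by simp
  have dMdy: "\<And>r. r < m \<Longrightarrow> (M *\<^sub>v dy) $ r = (\<Sum>s<m. M $$ (r, s) * dy $ s)"
    using mult_vec_sum[of _ M dy] M dy by simp
  have F1: "\<And>i. i < n \<Longrightarrow> dz $ i = H $$ (i,l) * t + (\<Sum>q<k. H $$ (i, pick B q) * dx $ pick B q)
          - (\<Sum>r<m. A $$ (r, i) * dy $ r)"
  proof -
    fix i assume i: "i < n"
    have "(H *\<^sub>v dx - transpose_mat A *\<^sub>v dy - dz) $ i = 0" using eq1 i by simp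
    thus "?thesis i" using i H A dx dy dz dHdx[OF i] dATdy[OF i] by simp
  qed
  have F2: "\<And>r. r < m \<Longrightarrow> A $$ (r,l) * t + (\<Sum>q<k. A $$ (r, pick B q) * dx $ pick B q)
          + (\<Sum>s<m. M $$ (r, s) * dy $ s) = 0"
  proof -
    fix r assume r: "r < m"
    have "(A *\<^sub>v dx + M *\<^sub>v dy) $ r = 0" using eq2 r by simp
    thus "?thesis r" using r A M dx dy dAdx[OF r] dMdy[OF r] by simp
  qed
  show "dz = H *\<^sub>v dx - transpose_mat A *\<^sub>v dy"
  proof (rule eq_vecI)
    fix i assume "i < dim_vec (H *\<^sub>v dx - transpose_mat A *\<^sub>v dy)"
    hence i: "i < n" using H A by simp
    show "dz $ i = (H *\<^sub>v dx - transpose_mat A *\<^sub>v dy) $ i"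
      using F1[OF i] dHdx[OF i] dATdy[OF i] i H A dx dy by simp
  qed (insert dz H A, simp)
  show "\<And>i. i < n \<Longrightarrow> dz $ i = H $$ (i, l) * dx $ l + (\<Sum>q<card B. H $$ (i, pick B q) * dx $ pick B q)
                   - (\<Sum>r<m. A $$ (r, i) * dy $ r)"
    using F1 unfolding t_def k_def .
  have dims: "dim_row H = n" "dim_col H = n" "dim_row A = m" "dim_col A = n" "dim_row M = m" "dim_col M = m"
    "dim_vec dx = n" "dim_vec dy = m" "dim_vec dz = n" using H A M dx dy dz by auto
  have dimsub: "dim_row (submatrix H B B) = k" "dim_col (submatrix H B B) = k"
    "dim_row (cols_sub A B) = m" "dim_col (cols_sub A B) = k" "dim_vec (subvec dx B) = k"
    "dim_row (submatrix A UNIV B) = m" "dim_col (submatrix A UNIV B) = k"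
    unfolding dim_submatrix cols_sub_def dim_subvec dims cB k_def by simp_all
  have cHBB: "submatrix H B B \<in> carrier_mat k k" using dimsub by (intro carrier_matI) 
  have cAB: "cols_sub A B \<in> carrier_mat m k" using dimsub by (intro carrier_matI)
  have cxB: "subvec dx B \<in> carrier_vec k" using dimsub by (intro carrier_vecI)
  have cmdy: "- dy \<in> carrier_vec m" using dy by simp
  have KBv: "KB H A M B *\<^sub>v (subvec dx B @\<^sub>v (- dy)) =
     (submatrix H B B *\<^sub>v subvec dx B + transpose_mat (cols_sub A B) *\<^sub>v (- dy)) @\<^sub>v
     (cols_sub A B *\<^sub>v subvec dx B + (- M) *\<^sub>v (- dy))"
    unfolding KB_def
    by (rule four_block_mat_mult_vec[OF cHBB _ cAB _ cxB cmdy], insert cAB M, auto)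
  show "KB H A M B *\<^sub>v (subvec dx B @\<^sub>v (- dy)) = - (dx $ l \<cdot>\<^sub>v KB_col H A B l)"
    unfolding KBv
  proof (rule eq_vecI)
    have dimc: "dim_vec (KB_col H A B l) = k + m" unfolding KB_col_def using H A cB k_def by simp
    show "dim_vec ((submatrix H B B *\<^sub>v subvec dx B + transpose_mat (cols_sub A B) *\<^sub>v (- dy)) @\<^sub>v
     (cols_sub A B *\<^sub>v subvec dx B + (- M) *\<^sub>v (- dy))) = dim_vec (- (dx $ l \<cdot>\<^sub>v KB_col H A B l))"
      using dimc cHBB cAB M by simp
    fix i assume "i < dim_vec (- (dx $ l \<cdot>\<^sub>v KB_col H A B l))"
    hence i: "i < k + m" using dimc by simp
    show "((submatrix H B B *\<^sub>v subvec dx B + transpose_mat (cols_sub A B) *\<^sub>v (- dy)) @\<^sub>v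
     (cols_sub A B *\<^sub>v subvec dx B + (- M) *\<^sub>v (- dy))) $ i = (- (dx $ l \<cdot>\<^sub>v KB_col H A B l)) $ i"
    proof (cases "i < k")
      case True
      have p: "pick B i \<in> B" "pick B i < n" using pickB[OF True] by auto
      have "(submatrix H B B *\<^sub>v subvec dx B) $ i = (\<Sum>q<k. H $$ (pick B i, pick B q) * dx $ pick B q)"
        using mult_vec_sum[of i "submatrix H B B" "subvec dx B"] True
        by (simp add: k_def[symmetric] dimsub submatrix_index subvec_index cB dims)
      moreover have "(transpose_mat (cols_sub A B) *\<^sub>v (- dy)) $ i = - (\<Sum>r<m. A $$ (r, pick B i) * dy $ r)"
        using mult_vec_sum[of i "transpose_mat (cols_sub A B)" "- dy"] True
        by (simp add: k_def[symmetric] dimsub dims submatrix_index cols_sub_def cB pick_UNIV sum_negf)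
      moreover have "KB_col H A B l $ i = H $$ (pick B i, l)"
        unfolding KB_col_def using True H A idx(1) cB k_def p by (simp add: subvec_index)
      moreover have "dz $ pick B i = 0" using zB p by simp
      ultimately show ?thesis using True cHBB cAB cxB dy M F1[OF p(2)] dimc by (simp add: t_def algebra_simps)
    next
      case False
      define r where "r = i - k"
      have r: "r < m" "i = k + r" using i False unfolding r_def by auto
      have "(cols_sub A B *\<^sub>v subvec dx B) $ r = (\<Sum>q<k. A $$ (r, pick B q) * dx $ pick B q)"
        using mult_vec_sum[of r "cols_sub A B" "subvec dx B"] r
        by (simp add: k_def[symmetric] dimsub dims submatrix_index subvec_index cols_sub_def cB pick_UNIV)
      moreover have "((- M) *\<^sub>v (- dy)) $ r = (\<Sum>s<m. M $$ (r, s) * dy $ s)"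
        using mult_vec_sum[of r "- M" "- dy"] M dy r by simp
      moreover have "KB_col H A B l $ i = A $$ (r, l)"
        unfolding KB_col_def using r H A idx(1) cB k_def by simp
      ultimately show ?thesis using r cHBB cAB cxB dy M F2[OF r(1)] dimc by (simp add: t_def algebra_simps)
    qed
  qed
qed



lemma smult_zero_vec': "v \<in> carrier_vec n \<Longrightarrow> (0::real) \<cdot>\<^sub>v v = 0\<^sub>v n"
  by (intro eq_vecI) auto

lemma order_lemma:
  fixes Km :: "real mat" and c w :: "real vec" and a :: real
  assumes K: "Km \<in> carrier_mat K K" "Km\<^sup>T = Km"
    and ker: "\<And>v. v \<in> carrier_vec K \<Longrightarrow> Km *\<^sub>v v = 0\<^sub>v K \<Longrightarrow> v = 0\<^sub>v K"
    and c: "c \<in> carrier_vec K" and w: "w \<in> carrier_vec K"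
    and Kw: "Km *\<^sub>v w = - c" and aw: "a + c \<bullet> w = 0"
  shows "order 0 (char_poly (four_block_mat (mat 1 1 (\<lambda>_. a)) (mat_of_rows K [c]) (mat_of_cols K [c]) Km)) = 1"
proof -
  define W where "W = mat_of_cols K [w]"
  define R where "R = mat_of_rows K [c]"
  define P where "P = four_block_mat (1\<^sub>m 1) (0\<^sub>m 1 K) W (1\<^sub>m K)"
  define Q where "Q = four_block_mat (1\<^sub>m 1) (0\<^sub>m 1 K) (- W) (1\<^sub>m K)"
  define T where "T = four_block_mat (0\<^sub>m 1 1) R (0\<^sub>m K 1) (Km - W * R)"
  define Kl where "Kl = four_block_mat (mat 1 1 (\<lambda>_. a)) R (mat_of_cols K [c]) Km"
  have cW: "W \<in> carrier_mat K 1" unfolding W_def using mat_of_cols_carrier(1)[of K "[w]"] by simp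
  have cR: "R \<in> carrier_mat 1 K" unfolding R_def using mat_of_rows_carrier(1)[of K "[c]"] by simp
  have cWR: "W * R \<in> carrier_mat K K" using cW cR by simp
  have cKWR: "Km - W * R \<in> carrier_mat K K" using cWR by (rule minus_carrier_mat)
  have cP: "P \<in> carrier_mat (1+K) (1+K)" unfolding P_def using cW by (intro four_block_carrier_mat) auto
  have cQ: "Q \<in> carrier_mat (1+K) (1+K)" unfolding Q_def using cW by (intro four_block_carrier_mat) auto
  have cT: "T \<in> carrier_mat (1+K) (1+K)" unfolding T_def using cR cKWR by (intro four_block_carrier_mat) auto
  have cKl: "Kl \<in> carrier_mat (1+K) (1+K)" unfolding Kl_def using cR K by (intro four_block_carrier_mat) auto
  have PQ: "P * Q = 1\<^sub>m (1+K)"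
    unfolding P_def Q_def
    apply (subst mult_four_block_mat[of _ 1 1 _ K _ K], insert cW, auto)
    apply (rule eq_matI, auto)
    done
  have QP: "Q * P = 1\<^sub>m (1+K)"
    unfolding P_def Q_def
    by (subst mult_four_block_mat[of _ 1 1 _ K _ K], insert cW, auto)
  have RW: "- (R * W) = mat 1 1 (\<lambda>_. a)"
  proof (rule eq_matI)
    fix i j assume "i < dim_row (mat 1 1 (\<lambda>_. a))" "j < dim_col (mat 1 1 (\<lambda>_. a))"
    hence ij: "i = 0" "j = 0" by auto
    have "col W 0 = w" unfolding W_def using w by (auto simp: mat_of_cols_def)
    moreover have "row R 0 = c" unfolding R_def using c by (auto simp: mat_of_rows_def)
    ultimately show "(- (R * W)) $$ (i, j) = mat 1 1 (\<lambda>_. a) $$ (i, j)"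
      using ij cR cW aw by simp
  qed (insert cR cW, auto)
  have KW: "- (Km * W) = mat_of_cols K [c]"
  proof (rule eq_matI)
    fix i j assume "i < dim_row (mat_of_cols K [c])" "j < dim_col (mat_of_cols K [c])"
    hence ij: "i < K" "j = 0" by auto
    have "col W 0 = w" unfolding W_def using w by (auto simp: mat_of_cols_def)
    hence "(Km * W) $$ (i, 0) = (Km *\<^sub>v w) $ i" using ij K cW by simp
    thus "(- (Km * W)) $$ (i, j) = mat_of_cols K [c] $$ (i, j)"
      using ij cW K Kw c by (simp add: mat_of_cols_def)
  qed (insert K cW, auto)
  have b1: "1\<^sub>m 1 * 0\<^sub>m 1 1 + 0\<^sub>m 1 K * 0\<^sub>m K 1 = (0\<^sub>m 1 1 :: real mat)" by (rule eq_matI, auto)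
  have b2: "1\<^sub>m 1 * R + 0\<^sub>m 1 K * (Km - W * R) = R"
  proof -
    have "0\<^sub>m 1 K * (Km - W * R) = 0\<^sub>m 1 K" using cKWR by (simp add: left_mult_zero_mat)
    thus ?thesis using cR by simp
  qed
  have b3: "W * 0\<^sub>m 1 1 + 1\<^sub>m K * 0\<^sub>m K 1 = (0\<^sub>m K 1 :: real mat)"
  proof -
    have "W * 0\<^sub>m 1 1 = 0\<^sub>m K 1" using cW by (simp add: right_mult_zero_mat)
    thus ?thesis by simp
  qed
  have b4: "W * R + 1\<^sub>m K * (Km - W * R) = Km"
  proof -
    have "1\<^sub>m K * (Km - W * R) = Km - W * R" by (rule left_mult_one_mat[OF cKWR])
    moreover have "W * R + (Km - W * R) = Km" by (rule eq_matI, insert carrier_matD[OF cWR] carrier_matD[OF K(1)], auto)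
    ultimately show ?thesis by simp
  qed
  have PT: "P * T = four_block_mat (0\<^sub>m 1 1) R (0\<^sub>m K 1) Km"
    unfolding P_def T_def
    by (subst mult_four_block_mat[of _ 1 1 _ K _ K _ _ 1 _ K], insert cW cR cKWR K, simp_all only: b1 b2 b3 b4 one_carrier_mat zero_carrier_mat)
  have c1: "0\<^sub>m 1 1 * 1\<^sub>m 1 + R * - W = mat 1 1 (\<lambda>_. a)"
    unfolding RW[symmetric] by (rule eq_matI, insert cR cW, auto)
  have c2: "0\<^sub>m 1 1 * 0\<^sub>m 1 K + R * 1\<^sub>m K = R" by (rule eq_matI, insert cR, auto)
  have c3: "0\<^sub>m K 1 * 1\<^sub>m 1 + Km * - W = mat_of_cols K [c]"
    unfolding KW[symmetric] by (rule eq_matI, insert K cW, auto)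
  have c4: "0\<^sub>m K 1 * 0\<^sub>m 1 K + Km * 1\<^sub>m K = Km" by (rule eq_matI, insert K, auto)
  have PTQ: "P * T * Q = Kl"
    unfolding PT Q_def Kl_def
    by (subst mult_four_block_mat[of _ 1 1 _ K _ K _ _ 1 _ K], insert cW cR cKWR K, simp_all only: c1 c2 c3 c4 one_carrier_mat zero_carrier_mat uminus_carrier_iff_mat)
  have sim: "similar_mat Kl T"
    unfolding similar_mat_def similar_mat_wit_def
    by (rule exI[of _ P], rule exI[of _ Q], insert cP cQ cT cKl PQ QP PTQ, auto simp: Let_def)
  have cp: "char_poly Kl = char_poly (0\<^sub>m 1 1) * char_poly (Km - W * R)"
    unfolding char_poly_similar[OF sim] T_def
    by (rule char_poly_four_block_zeros_col, insert cR cKWR, auto)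
  have cp0: "char_poly (0\<^sub>m 1 1 :: real mat) = [:0, 1:]"
    unfolding char_poly_defs by (subst det_single, auto)
  have ker2: "\<And>u. u \<in> carrier_vec K \<Longrightarrow> (Km - W * R) *\<^sub>v u = 0\<^sub>v K \<Longrightarrow> u = 0\<^sub>v K"
  proof -
    fix u :: "real vec" assume u: "u \<in> carrier_vec K" and z: "(Km - W * R) *\<^sub>v u = 0\<^sub>v K"
    define s where "s = c \<bullet> u"
    have Ru: "R *\<^sub>v u = vec 1 (\<lambda>_. s)"
      by (rule eq_vecI, insert cR c u, auto simp: R_def s_def mat_of_rows_def row_def scalar_prod_def)
    have WRu: "W *\<^sub>v (R *\<^sub>v u) = s \<cdot>\<^sub>v w"
      unfolding Ru by (rule eq_vecI, insert cW w, auto simp: W_def mat_of_cols_def row_def scalar_prod_def)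
    have "(Km - W * R) *\<^sub>v u = Km *\<^sub>v u - (W * R) *\<^sub>v u"
      by (rule minus_mult_distrib_mat_vec[OF K(1) cWR u])
    also have "(W * R) *\<^sub>v u = W *\<^sub>v (R *\<^sub>v u)" by (rule assoc_mult_mat_vec[OF cW cR u])
    finally have "Km *\<^sub>v u - s \<cdot>\<^sub>v w = 0\<^sub>v K" using z WRu by simp
    hence Ku: "Km *\<^sub>v u = s \<cdot>\<^sub>v w"
    proof -
      assume h: "Km *\<^sub>v u - s \<cdot>\<^sub>v w = 0\<^sub>v K"
      show ?thesis
      proof (rule eq_vecI)
        fix i assume "i < dim_vec (s \<cdot>\<^sub>v w)"
        hence i: "i < K" using w by simp
        have "(Km *\<^sub>v u - s \<cdot>\<^sub>v w) $ i = 0" using h i by simp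
        thus "(Km *\<^sub>v u) $ i = (s \<cdot>\<^sub>v w) $ i" using i K w u by simp
      qed (insert K w, simp)
    qed
    have "w \<bullet> (Km *\<^sub>v u) = (Km\<^sup>T *\<^sub>v w) \<bullet> u" using transpose_vec_mult_scalar[OF K(1) u w] by simp
    also have "\<dots> = - s" using K(2) Kw c u unfolding s_def by simp
    finally have e1: "w \<bullet> (Km *\<^sub>v u) = - s" .
    have e2: "w \<bullet> (Km *\<^sub>v u) = s * (w \<bullet> w)" unfolding Ku using w by simp
    have "w \<bullet> w \<ge> 0" using conjugate_square_ge_0_vec[of w] by (simp add: conjugate_vec_def conjugate_real_def)
    hence pos: "1 + w \<bullet> w > 0" by simp
    have "s * (1 + w \<bullet> w) = 0" using e1 e2 by (simp add: algebra_simps)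
    hence "s = 0" using pos by simp
    hence "Km *\<^sub>v u = 0\<^sub>v K" using Ku w by (intro eq_vecI) auto
    thus "u = 0\<^sub>v K" using ker u by blast
  qed
  have nz: "poly (char_poly (Km - W * R)) 0 \<noteq> 0"
  proof
    assume "poly (char_poly (Km - W * R)) 0 = 0"
    hence "eigenvalue (Km - W * R) 0" using eigenvalue_root_char_poly[OF cKWR] by simp
    then obtain v where "eigenvector (Km - W * R) v 0" unfolding eigenvalue_def by blast
    hence v: "v \<in> carrier_vec K" "v \<noteq> 0\<^sub>v K" "(Km - W * R) *\<^sub>v v = 0\<^sub>v K"
      unfolding eigenvector_def using cKWR cW smult_zero_vec' by auto
    thus False using ker2 by blast
  qed
  have q0: "char_poly (Km - W * R) \<noteq> 0" using nz by auto
  have "order 0 (char_poly Kl) = order 0 [:0, 1::real:] + order 0 (char_poly (Km - W * R))"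
    unfolding cp cp0 using order_mult[of "[:0,1::real:]" "char_poly (Km - W*R)" 0] q0 by simp
  also have "order 0 (char_poly (Km - W * R)) = 0" using nz order_root by blast
  also have "order 0 [:0, 1::real:] = 1" using order_power_n_n[of 0 1] by simp
  finally show ?thesis unfolding Kl_def R_def by simp
qed


lemma invertible_iff_ker:
  fixes X :: "real mat"
  assumes X: "X \<in> carrier_mat n n"
  shows "invertible_mat X \<longleftrightarrow> (\<forall>v \<in> carrier_vec n. X *\<^sub>v v = 0\<^sub>v n \<longrightarrow> v = 0\<^sub>v n)"
proof
  assume "invertible_mat X"
  then obtain Y where XY: "X * Y = 1\<^sub>m n" and YX: "Y * X = 1\<^sub>m (dim_row Y)"
    unfolding invertible_mat_def inverts_mat_def using X by auto
  have "dim_col (X * Y) = n" using XY by simp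
  hence cY1: "dim_col Y = n" by simp
  have "dim_col (Y * X) = dim_row Y" using YX by simp
  hence "dim_row Y = n" using X by simp
  hence Y: "Y \<in> carrier_mat n n" using cY1 by auto
  show "\<forall>v \<in> carrier_vec n. X *\<^sub>v v = 0\<^sub>v n \<longrightarrow> v = 0\<^sub>v n"
  proof (intro ballI impI)
    fix v assume v: "v \<in> carrier_vec n" and z: "X *\<^sub>v v = 0\<^sub>v n"
    have "v = (Y * X) *\<^sub>v v" using YX Y v by simp
    also have "\<dots> = Y *\<^sub>v (X *\<^sub>v v)" using assoc_mult_mat_vec[OF Y X v] .
    also have "\<dots> = 0\<^sub>v n" unfolding z by (rule eq_vecI, insert Y, auto)
    finally show "v = 0\<^sub>v n" .
  qed
next
  assume k: "\<forall>v \<in> carrier_vec n. X *\<^sub>v v = 0\<^sub>v n \<longrightarrow> v = 0\<^sub>v n"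
  have "det X \<noteq> 0" using det_0_iff_vec_prod_zero_field[OF X] k by auto
  from det_non_zero_imp_unit[OF X this, of "()"]
  obtain Y where Y: "Y \<in> carrier_mat n n" "X * Y = 1\<^sub>m n" "Y * X = 1\<^sub>m n"
    unfolding Units_def ring_mat_def by auto
  show "invertible_mat X" unfolding invertible_mat_def inverts_mat_def square_mat.simps
    using X Y by auto
qed

lemma Klabs_mult:
  fixes Km :: "real mat" and c u :: "real vec"
  assumes K: "Km \<in> carrier_mat K K" and c: "c \<in> carrier_vec K" and u: "u \<in> carrier_vec K"
  shows "four_block_mat (mat 1 1 (\<lambda>_. a)) (mat_of_rows K [c]) (mat_of_cols K [c]) Km *\<^sub>v (vec 1 (\<lambda>_. s) @\<^sub>v u)
     = vec 1 (\<lambda>_. a * s + c \<bullet> u) @\<^sub>v (s \<cdot>\<^sub>v c + Km *\<^sub>v u)"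
proof -
  have cR: "mat_of_rows K [c] \<in> carrier_mat 1 K" using mat_of_rows_carrier(1)[of K "[c]"] by simp
  have cW: "mat_of_cols K [c] \<in> carrier_mat K 1" using mat_of_cols_carrier(1)[of K "[c]"] by simp
  have e: "four_block_mat (mat 1 1 (\<lambda>_. a)) (mat_of_rows K [c]) (mat_of_cols K [c]) Km *\<^sub>v (vec 1 (\<lambda>_. s) @\<^sub>v u)
    = (mat 1 1 (\<lambda>_. a) *\<^sub>v vec 1 (\<lambda>_. s) + mat_of_rows K [c] *\<^sub>v u) @\<^sub>v
      (mat_of_cols K [c] *\<^sub>v vec 1 (\<lambda>_. s) + Km *\<^sub>v u)"
    by (rule four_block_mat_mult_vec[OF _ cR cW K _ u], auto)
  have e1: "mat 1 1 (\<lambda>_. a) *\<^sub>v vec 1 (\<lambda>_. s) + mat_of_rows K [c] *\<^sub>v u = vec 1 (\<lambda>_. a * s + c \<bullet> u)"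
    by (rule eq_vecI, insert c u, auto simp: mat_of_rows_def row_def scalar_prod_def)
  have e2: "mat_of_cols K [c] *\<^sub>v vec 1 (\<lambda>_. s) + Km *\<^sub>v u = s \<cdot>\<^sub>v c + Km *\<^sub>v u"
    by (rule eq_vecI, insert c u K, auto simp: mat_of_cols_def row_def scalar_prod_def)
  show ?thesis unfolding e e1 e2 ..
qed

lemma sym_entry: "H \<in> carrier_mat n n \<Longrightarrow> H\<^sup>T = H \<Longrightarrow> i < n \<Longrightarrow> j < n \<Longrightarrow> H $$ (i,j) = H $$ (j,i)"
  by (metis carrier_matD index_transpose_mat(1))

lemma KB_sym:
  fixes H M A :: "real mat"
  assumes H: "H \<in> carrier_mat n n" "H\<^sup>T = H" and M: "M \<in> carrier_mat m m" "M\<^sup>T = M"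
    and A: "A \<in> carrier_mat m n" and Bs: "B \<subseteq> {0..<n}"
  shows "(KB H A M B)\<^sup>T = KB H A M B"
proof -
  define k where "k = card B"
  have cB: "{i. i < n \<and> i \<in> B} = B" using Bs by auto
  have cHBB: "submatrix H B B \<in> carrier_mat k k" using H cB unfolding k_def
    by (intro carrier_matI) (simp_all add: dim_submatrix)
  have cAB: "cols_sub A B \<in> carrier_mat m k" using A cB unfolding k_def cols_sub_def
    by (intro carrier_matI) (simp_all add: dim_submatrix)
  have s1: "(submatrix H B B)\<^sup>T = submatrix H B B"
  proof (rule eq_matI)
    fix i j assume "i < dim_row (submatrix H B B)" "j < dim_col (submatrix H B B)"
    hence ij: "i < k" "j < k" using cHBB by auto
    have "pick B i \<in> B" "pick B j \<in> B" using pick_in_set[of i B] pick_in_set[of j B] ij unfolding k_def by auto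
    hence p: "pick B i < n" "pick B j < n" using Bs by auto
    show "(submatrix H B B)\<^sup>T $$ (i, j) = submatrix H B B $$ (i, j)"
      using ij cHBB p sym_entry[OF H] by (simp add: submatrix_index dim_submatrix cB k_def[symmetric] carrier_matD[OF H(1)])
  qed (insert cHBB, auto)
  have s2: "(- M)\<^sup>T = - M" by (rule eq_matI, insert M, auto simp: sym_entry[OF M])
  show ?thesis unfolding KB_def
    by (subst transpose_four_block_mat[OF cHBB _ cAB], insert cAB M s1 s2, auto)
qed


lemma core2:
  fixes H M A :: "real mat" and n m l :: nat and B N :: "nat set"
  assumes H: "H \<in> carrier_mat n n" "H\<^sup>T = H"
    and M: "M \<in> carrier_mat m m"
    and A: "A \<in> carrier_mat m n"
    and idx: "l < n" "l \<notin> B" "l \<notin> N" "B \<inter> N = {}" "B \<union> {l} \<union> N = {0..<n}"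
    and S: "sys H A M B N dx dy dz"
  shows "dz $ l = H $$ (l, l) * dx $ l + subvec (col H l) B \<bullet> subvec dx B - col A l \<bullet> dy"
    and "subvec dz N = dx $ l \<cdot>\<^sub>v subvec (col H l) N
                         + (submatrix H B N)\<^sup>T *\<^sub>v subvec dx B
                         - (cols_sub A N)\<^sup>T *\<^sub>v dy"
    and "dx $ l * dz $ l = dx \<bullet> (H *\<^sub>v dx) + dy \<bullet> (M *\<^sub>v dy)"
proof -
  define k where "k = card B"
  define t where "t = dx $ l"
  have Bsub: "B \<subseteq> {0..<n}" "N \<subseteq> {0..<n}" using idx by auto
  have cB: "{i. i < n \<and> i \<in> B} = B" "{i. i < n \<and> i \<in> N} = N" using Bsub by auto
  have dx: "dx \<in> carrier_vec n" and dy: "dy \<in> carrier_vec m" and dz: "dz \<in> carrier_vec n"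
    using S H M unfolding sys_def by auto
  have eq2: "A *\<^sub>v dx + M *\<^sub>v dy = 0\<^sub>v m"
    and xN: "\<forall>i\<in>N. dx $ i = 0" and zB: "\<forall>i\<in>B. dz $ i = 0"
    using S H M unfolding sys_def by auto
  have dims: "dim_row H = n" "dim_col H = n" "dim_row A = m" "dim_col A = n" "dim_row M = m" "dim_col M = m"
    "dim_vec dx = n" "dim_vec dy = m" "dim_vec dz = n" using H A M dx dy dz by auto
  note F1 = core(3)[OF H(1) M A idx S]
  note dzf = core(2)[OF H(1) M A idx S]
  have pickB: "\<And>q. q < k \<Longrightarrow> pick B q \<in> B \<and> pick B q < n"
  proof -
    fix q assume "q < k" hence "pick B q \<in> B" using pick_in_set[of q B] unfolding k_def by auto
    thus "pick B q \<in> B \<and> pick B q < n" using Bsub by auto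
  qed
  have pickN: "\<And>q. q < card N \<Longrightarrow> pick N q \<in> N \<and> pick N q < n"
  proof -
    fix q assume "q < card N" hence "pick N q \<in> N" using pick_in_set[of q N] by auto
    thus "pick N q \<in> N \<and> pick N q < n" using Bsub by auto
  qed
  have s1: "subvec (col H l) B \<bullet> subvec dx B = (\<Sum>q<k. H $$ (l, pick B q) * dx $ pick B q)"
  proof -
    have "subvec (col H l) B \<bullet> subvec dx B = (\<Sum>q<k. subvec (col H l) B $ q * subvec dx B $ q)"
      unfolding scalar_prod_def by (simp add: dims cB k_def lessThan_atLeast0)
    also have "\<dots> = (\<Sum>q<k. H $$ (l, pick B q) * dx $ pick B q)"
    proof (rule sum.cong[OF refl])
      fix q assume "q \<in> {..<k}"
      hence q: "q < k" by simp
      show "subvec (col H l) B $ q * subvec dx B $ q = H $$ (l, pick B q) * dx $ pick B q"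
        using q pickB[OF q] idx(1) sym_entry[OF H, of "pick B q" l]
        by (simp add: subvec_index dims cB k_def[symmetric])
    qed
    finally show ?thesis .
  qed
  have s2: "col A l \<bullet> dy = (\<Sum>r<m. A $$ (r, l) * dy $ r)"
    unfolding scalar_prod_def using idx(1) by (simp add: dims lessThan_atLeast0)
  show "dz $ l = H $$ (l, l) * dx $ l + subvec (col H l) B \<bullet> subvec dx B - col A l \<bullet> dy"
    unfolding s1 s2 using F1[OF idx(1)] by (simp add: k_def)
  show "subvec dz N = dx $ l \<cdot>\<^sub>v subvec (col H l) N
                         + (submatrix H B N)\<^sup>T *\<^sub>v subvec dx B
                         - (cols_sub A N)\<^sup>T *\<^sub>v dy"
  proof (rule eq_vecI)
    fix p assume "p < dim_vec (dx $ l \<cdot>\<^sub>v subvec (col H l) N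
                         + (submatrix H B N)\<^sup>T *\<^sub>v subvec dx B
                         - (cols_sub A N)\<^sup>T *\<^sub>v dy)"
    hence p: "p < card N" by (simp add: dims cB cols_sub_def dim_submatrix)
    have pn: "pick N p \<in> N" "pick N p < n" using pickN[OF p] by auto
    have t1: "((submatrix H B N)\<^sup>T *\<^sub>v subvec dx B) $ p = (\<Sum>q<k. H $$ (pick N p, pick B q) * dx $ pick B q)"
    proof -
      have "((submatrix H B N)\<^sup>T *\<^sub>v subvec dx B) $ p = (\<Sum>q<k. (submatrix H B N)\<^sup>T $$ (p, q) * subvec dx B $ q)"
        using mult_vec_sum[of p "(submatrix H B N)\<^sup>T" "subvec dx B"] p
        by (simp add: dim_submatrix dims cB k_def)
      also have "\<dots> = (\<Sum>q<k. H $$ (pick N p, pick B q) * dx $ pick B q)"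
      proof (rule sum.cong[OF refl])
        fix q assume "q \<in> {..<k}"
        hence q: "q < k" by simp
        show "(submatrix H B N)\<^sup>T $$ (p, q) * subvec dx B $ q = H $$ (pick N p, pick B q) * dx $ pick B q"
          using q p pickB[OF q] pn sym_entry[OF H, of "pick B q" "pick N p"]
          by (simp add: subvec_index submatrix_index dim_submatrix dims cB k_def[symmetric])
      qed
      finally show ?thesis .
    qed
    have t2: "((cols_sub A N)\<^sup>T *\<^sub>v dy) $ p = (\<Sum>r<m. A $$ (r, pick N p) * dy $ r)"
    proof -
      have "((cols_sub A N)\<^sup>T *\<^sub>v dy) $ p = (\<Sum>r<m. (cols_sub A N)\<^sup>T $$ (p, r) * dy $ r)"
        using mult_vec_sum[of p "(cols_sub A N)\<^sup>T" dy] p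
        by (simp add: dim_submatrix dims cB cols_sub_def)
      also have "\<dots> = (\<Sum>r<m. A $$ (r, pick N p) * dy $ r)"
        by (rule sum.cong[OF refl], insert p, simp add: submatrix_index dim_submatrix dims cB cols_sub_def pick_UNIV)
      finally show ?thesis .
    qed
    have t0: "subvec (col H l) N $ p = H $$ (pick N p, l)"
      using p pn idx(1) by (simp add: subvec_index dims cB)
    have dimsN: "dim_vec ((submatrix H B N)\<^sup>T *\<^sub>v subvec dx B) = card N"
        "dim_vec ((cols_sub A N)\<^sup>T *\<^sub>v dy) = card N" "dim_vec (subvec (col H l) N) = card N"
      by (simp_all add: dim_submatrix dims cB cols_sub_def)
    show "subvec dz N $ p = (dx $ l \<cdot>\<^sub>v subvec (col H l) N
                         + (submatrix H B N)\<^sup>T *\<^sub>v subvec dx B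
                         - (cols_sub A N)\<^sup>T *\<^sub>v dy) $ p"
      using p dimsN t0 t1 t2 F1[OF pn(2)] by (simp add: subvec_index dims cB k_def algebra_simps)
  qed (simp add: dim_submatrix dims cB cols_sub_def)
  have cHdx: "H *\<^sub>v dx \<in> carrier_vec n" using H dx by simp
  have cATdy: "A\<^sup>T *\<^sub>v dy \<in> carrier_vec n" using A dy by simp
  have "dx \<bullet> dz = (\<Sum>i<n. dx $ i * dz $ i)" unfolding scalar_prod_def by (simp add: dims lessThan_atLeast0)
  also have "\<dots> = dx $ l * dz $ l + (\<Sum>q<k. dx $ pick B q * dz $ pick B q)"
    unfolding k_def by (rule sum_split[OF idx], insert xN, auto)
  also have "(\<Sum>q<k. dx $ pick B q * dz $ pick B q) = 0" using zB pickB by simp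
  finally have ed1: "dx \<bullet> dz = dx $ l * dz $ l" by simp
  have "dx \<bullet> dz = dx \<bullet> (H *\<^sub>v dx) - dx \<bullet> (A\<^sup>T *\<^sub>v dy)"
    unfolding dzf by (rule scalar_prod_minus_distrib[OF dx cHdx cATdy])
  also have "dx \<bullet> (A\<^sup>T *\<^sub>v dy) = (A *\<^sub>v dx) \<bullet> dy"
  proof -
    have "(A\<^sup>T *\<^sub>v dy) \<bullet> dx = dy \<bullet> (A *\<^sub>v dx)" by (rule transpose_vec_mult_scalar[OF A dx dy])
    moreover have "(A\<^sup>T *\<^sub>v dy) \<bullet> dx = dx \<bullet> (A\<^sup>T *\<^sub>v dy)" by (rule comm_scalar_prod[OF cATdy dx])
    moreover have "dy \<bullet> (A *\<^sub>v dx) = (A *\<^sub>v dx) \<bullet> dy" by (rule comm_scalar_prod[OF dy], insert A dx, simp)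
    ultimately show ?thesis by simp
  qed
  also have "A *\<^sub>v dx = - (M *\<^sub>v dy)"
  proof (rule eq_vecI)
    fix r assume "r < dim_vec (- (M *\<^sub>v dy))"
    hence r: "r < m" using M by simp
    have "(A *\<^sub>v dx + M *\<^sub>v dy) $ r = 0" using eq2 r by simp
    thus "(A *\<^sub>v dx) $ r = (- (M *\<^sub>v dy)) $ r" using r A M dx dy by simp
  qed (insert A M, simp)
  also have "(- (M *\<^sub>v dy)) \<bullet> dy = - (dy \<bullet> (M *\<^sub>v dy))"
  proof -
    have "(- (M *\<^sub>v dy)) \<bullet> dy = - ((M *\<^sub>v dy) \<bullet> dy)" using M dy by simp
    also have "(M *\<^sub>v dy) \<bullet> dy = dy \<bullet> (M *\<^sub>v dy)" by (rule comm_scalar_prod[of _ m], insert M dy, auto)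
    finally show ?thesis .
  qed
  finally show "dx $ l * dz $ l = dx \<bullet> (H *\<^sub>v dx) + dy \<bullet> (M *\<^sub>v dy)" using ed1 by simp
qed


lemma zero_append: "0\<^sub>v (k + m) = (0\<^sub>v k @\<^sub>v 0\<^sub>v m :: real vec)"
  by (rule eq_vecI) auto

lemma vec_minus_zero: "(a :: real vec) - b = 0\<^sub>v n \<Longrightarrow> a \<in> carrier_vec n \<Longrightarrow> b \<in> carrier_vec n \<Longrightarrow> a = b"
proof (rule eq_vecI)
  fix i assume h: "a - b = 0\<^sub>v n" "a \<in> carrier_vec n" "b \<in> carrier_vec n" and i: "i < dim_vec b"
  have "(a - b) $ i = 0" using h i by simp
  moreover have "(a - b) $ i = a $ i - b $ i" using h(2,3) i by simp
  ultimately show "a $ i = b $ i" by simp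
qed auto

lemma recon:
  fixes H M A :: "real mat" and n m l :: nat and B N :: "nat set"
  assumes H: "H \<in> carrier_mat n n" and M: "M \<in> carrier_mat m m"
    and idx: "l < n" "l \<notin> B" "l \<notin> N" "B \<inter> N = {}" "B \<union> {l} \<union> N = {0..<n}"
    and S: "sys H A M B N dx dy dz" and S': "sys H A M B N dx' dy' dz'"
    and e: "dx $ l = dx' $ l" "subvec dx B = subvec dx' B"
  shows "dx = dx'"
proof -
  have dx: "dx \<in> carrier_vec n" "dx' \<in> carrier_vec n" and xN: "\<forall>i\<in>N. dx $ i = 0" "\<forall>i\<in>N. dx' $ i = 0"
    using S S' H unfolding sys_def by auto
  have Bsub: "B \<subseteq> {0..<n}" using idx by auto
  hence finB: "finite B" using finite_subset by blast
  have cB: "{i. i < n \<and> i \<in> B} = B" using Bsub by auto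
  show ?thesis
  proof (rule eq_vecI)
    fix i assume "i < dim_vec dx'"
    hence i: "i < n" using dx by simp
    show "dx $ i = dx' $ i"
    proof (cases "i \<in> B")
      case True
      define j where "j = card {a\<in>B. a < i}"
      have "{a\<in>B. a < i} \<subset> B" using True by auto
      hence j: "j < card B" unfolding j_def using finB psubset_card_mono by blast
      have pj: "pick B j = i" unfolding j_def by (rule pick_card_in_set[OF True])
      have dd: "dim_vec dx = n" "dim_vec dx' = n" using dx by auto
      have "subvec dx B $ j = dx $ i" using j pj by (simp add: subvec_index cB dd)
      moreover have "subvec dx' B $ j = dx' $ i" using j pj by (simp add: subvec_index cB dd)
      ultimately show ?thesis using e(2) by simp
    next
      case False
      have "i \<in> B \<union> {l} \<union> N" unfolding idx(5) using i by simp
      hence "i = l \<or> i \<in> N" using False by blast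
      thus ?thesis
      proof
        assume "i = l" thus ?thesis using e(1) by simp
      next
        assume "i \<in> N" thus ?thesis using xN by simp
      qed
    qed
  qed (insert dx, simp)
qed

lemma uniq:
  fixes H M A :: "real mat" and n m l :: nat and B N :: "nat set"
  assumes H: "H \<in> carrier_mat n n"
    and M: "M \<in> carrier_mat m m"
    and A: "A \<in> carrier_mat m n"
    and idx: "l < n" "l \<notin> B" "l \<notin> N" "B \<inter> N = {}" "B \<union> {l} \<union> N = {0..<n}"
    and KBns: "invertible_mat (KB H A M B)"
    and S: "sys H A M B N dx dy dz" and S': "sys H A M B N dx' dy' dz'"
    and e: "dx $ l = dx' $ l"
  shows "subvec dx B = subvec dx' B \<and> dy = dy' \<and> dz = dz'"
proof -
  define k where "k = card B"
  have Bsub: "B \<subseteq> {0..<n}" using idx by auto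
  have cB: "{i. i < n \<and> i \<in> B} = B" using Bsub by auto
  have dx: "dx \<in> carrier_vec n" "dx' \<in> carrier_vec n" and dy: "dy \<in> carrier_vec m" "dy' \<in> carrier_vec m"
    using S S' H M unfolding sys_def by auto
  have cxB: "subvec dx B \<in> carrier_vec k" "subvec dx' B \<in> carrier_vec k"
    using dx by (auto intro!: carrier_vecI simp: cB k_def)
  have cz: "subvec dx B @\<^sub>v (- dy) \<in> carrier_vec (k + m)" "subvec dx' B @\<^sub>v (- dy') \<in> carrier_vec (k + m)"
    using cxB dy by auto
  have cKB: "KB H A M B \<in> carrier_mat (k + m) (k + m)" unfolding KB_def
    using H A M by (intro four_block_carrier_mat) (auto intro!: carrier_matI simp: dim_submatrix cols_sub_def cB k_def)
  have ker: "\<forall>v \<in> carrier_vec (k+m). KB H A M B *\<^sub>v v = 0\<^sub>v (k+m) \<longrightarrow> v = 0\<^sub>v (k+m)"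
    using invertible_iff_ker[OF cKB] KBns by blast
  have C1: "KB H A M B *\<^sub>v (subvec dx B @\<^sub>v (- dy)) = - (dx $ l \<cdot>\<^sub>v KB_col H A B l)"
    "KB H A M B *\<^sub>v (subvec dx' B @\<^sub>v (- dy')) = - (dx' $ l \<cdot>\<^sub>v KB_col H A B l)"
    using core(1)[OF H M A idx S] core(1)[OF H M A idx S'] by auto
  have "KB H A M B *\<^sub>v ((subvec dx B @\<^sub>v (- dy)) - (subvec dx' B @\<^sub>v (- dy'))) = 0\<^sub>v (k+m)"
  proof -
    have dimc: "dim_vec (KB_col H A B l) = k + m" unfolding KB_col_def using H A idx(1) cB k_def by simp
    show ?thesis unfolding mult_minus_distrib_mat_vec[OF cKB cz] C1 e
      by (rule eq_vecI, insert dimc, auto)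
  qed
  hence "(subvec dx B @\<^sub>v (- dy)) - (subvec dx' B @\<^sub>v (- dy')) = 0\<^sub>v (k+m)" using ker cz by auto
  hence "subvec dx B @\<^sub>v (- dy) = subvec dx' B @\<^sub>v (- dy')"
    using cz by (rule vec_minus_zero)
  hence x: "subvec dx B = subvec dx' B" and "- dy = - dy'" using append_vec_eq[OF cxB] by auto
  hence y: "dy = dy'" using uminus_uminus_vec[of dy] uminus_uminus_vec[of dy'] by metis
  have xx: "dx = dx'" by (rule recon[OF H M idx S S' e x])
  have "dz = dz'" using core(2)[OF H M A idx S] core(2)[OF H M A idx S'] xx y by simp
  thus ?thesis using x y by simp
qed


lemma mult_zero_vec': "X \<in> carrier_mat r c \<Longrightarrow> X *\<^sub>v 0\<^sub>v c = (0\<^sub>v r :: real vec)"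
  by (rule eq_vecI) auto

lemma sys_zero:
  assumes H: "H \<in> carrier_mat n n" and M: "M \<in> carrier_mat m m" and A: "A \<in> carrier_mat m n"
    and BN: "B \<subseteq> {0..<n}" "N \<subseteq> {0..<n}"
  shows "sys H A M B N (0\<^sub>v n) (0\<^sub>v m) (0\<^sub>v n)"
  unfolding sys_def using H M A BN by (auto intro!: eq_vecI)

theorem proposition3:
  fixes H M A :: "real mat" and n m l :: nat and B N :: "nat set"
  assumes H: "H \<in> carrier_mat n n" "H\<^sup>T = H" "psd H"
    and M: "M \<in> carrier_mat m m" "M\<^sup>T = M" "psd M"
    and A: "A \<in> carrier_mat m n"
    and idx: "l < n" "l \<notin> B" "l \<notin> N" "B \<inter> N = {}" "B \<union> {l} \<union> N = {0..<n}"
    and KBns: "invertible_mat (KB H A M B)"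
  shows
    "(\<forall>dx dy dz. sys H A M B N dx dy dz \<and> dx $ l = 0 \<longrightarrow>
        subvec dx B = 0\<^sub>v (card B) \<and> dy = 0\<^sub>v m \<and> dz $ l = 0 \<and> subvec dz N = 0\<^sub>v (card N))
   \<and> (\<forall>t::real. t > 0 \<longrightarrow>
       (\<forall>dx dy dz dx' dy' dz'. sys H A M B N dx dy dz \<and> dx $ l = t \<and>
            sys H A M B N dx' dy' dz' \<and> dx' $ l = t \<longrightarrow>
          subvec dx B = subvec dx' B \<and> dy = dy' \<and> dz $ l = dz' $ l \<and> subvec dz N = subvec dz' N)
     \<and> (\<forall>dx dy dz. sys H A M B N dx dy dz \<and> dx $ l = t \<longrightarrow>
          KB H A M B *\<^sub>v (subvec dx B @\<^sub>v (- dy)) = - (t \<cdot>\<^sub>v KB_col H A B l)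
        \<and> dz $ l = H $$ (l, l) * t + subvec (col H l) B \<bullet> subvec dx B - col A l \<bullet> dy
        \<and> subvec dz N = t \<cdot>\<^sub>v subvec (col H l) N
                         + (submatrix H B N)\<^sup>T *\<^sub>v subvec dx B
                         - (cols_sub A N)\<^sup>T *\<^sub>v dy
        \<and> ((invertible_mat (Kl H A M B l) \<and> dz $ l > 0)
           \<or> (\<not> invertible_mat (Kl H A M B l) \<and> dz $ l = 0
              \<and> dy = 0\<^sub>v m \<and> subvec dz N = 0\<^sub>v (card N)
              \<and> order 0 (char_poly (Kl H A M B l)) = 1
              \<and> eigenvector (Kl H A M B l) (vec 1 (\<lambda>_. t) @\<^sub>v subvec dx B @\<^sub>v 0\<^sub>v m) 0))))"
  
proof -
  define k where "k = card B"
  define c where "c = KB_col H A B l"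
  define Kb where "Kb = KB H A M B"
  define a where "a = H $$ (l, l)"
  have Bsub: "B \<subseteq> {0..<n}" "N \<subseteq> {0..<n}" using idx by auto
  have cB: "{i. i < n \<and> i \<in> B} = B" "{i. i < n \<and> i \<in> N} = N" using Bsub by auto
  have dims: "dim_row H = n" "dim_col H = n" "dim_row A = m" "dim_col A = n" "dim_row M = m" "dim_col M = m"
    using H A M by auto
  have cKB: "Kb \<in> carrier_mat (k + m) (k + m)" unfolding KB_def Kb_def
    using H A M by (intro four_block_carrier_mat) (auto intro!: carrier_matI simp: dim_submatrix cols_sub_def cB k_def)
  have dimc: "dim_vec c = k + m" unfolding c_def KB_col_def using H A idx(1) cB k_def by simp
  have cc: "c \<in> carrier_vec (k + m)" using dimc by (rule carrier_vecI)
  have ker: "\<forall>v \<in> carrier_vec (k+m). Kb *\<^sub>v v = 0\<^sub>v (k+m) \<longrightarrow> v = 0\<^sub>v (k+m)"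
    using invertible_iff_ker[OF cKB] KBns unfolding Kb_def by blast
  have KlE: "Kl H A M B l = four_block_mat (mat 1 1 (\<lambda>_. a)) (mat_of_rows (k+m) [c]) (mat_of_cols (k+m) [c]) Kb"
    unfolding Kl_def Let_def c_def[symmetric] Kb_def a_def dimc ..
  have cR: "mat_of_rows (k+m) [c] \<in> carrier_mat 1 (k+m)" using mat_of_rows_carrier(1)[of "k+m" "[c]"] by simp
  have cW: "mat_of_cols (k+m) [c] \<in> carrier_mat (k+m) 1" using mat_of_cols_carrier(1)[of "k+m" "[c]"] by simp
  have cKl: "Kl H A M B l \<in> carrier_mat (1 + (k+m)) (1 + (k+m))" unfolding KlE
    using cR cW cKB by (intro four_block_carrier_mat) auto
  have Ksym: "Kb\<^sup>T = Kb" unfolding Kb_def by (rule KB_sym[OF H(1,2) M(1,2) A Bsub(1)])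
  have S0: "sys H A M B N (0\<^sub>v n) (0\<^sub>v m) (0\<^sub>v n)" by (rule sys_zero[OF H(1) M(1) A Bsub])
  have sub0: "\<And>S. S \<subseteq> {0..<n} \<Longrightarrow> subvec (0\<^sub>v n) S = (0\<^sub>v (card S) :: real vec)"
  proof -
    fix S :: "nat set" assume S: "S \<subseteq> {0..<n}"
    hence cS: "{i. i < n \<and> i \<in> S} = S" by auto
    show "subvec (0\<^sub>v n) S = (0\<^sub>v (card S) :: real vec)"
    proof (rule eq_vecI)
      fix i assume "i < dim_vec (0\<^sub>v (card S) :: real vec)"
      hence i: "i < card S" by simp
      have "finite S" using S finite_subset by blast
      hence "pick S i \<in> S" using pick_in_set[of i S] i by auto
      hence "pick S i < n" using S by auto
      thus "subvec (0\<^sub>v n) S $ i = (0\<^sub>v (card S) :: real vec) $ i" using i by (simp add: subvec_index cS)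
    qed (simp add: cS)
  qed
  have sol: "\<And>dx dy dz. sys H A M B N dx dy dz \<Longrightarrow>
      subvec dx B \<in> carrier_vec k \<and> dx \<in> carrier_vec n \<and> dy \<in> carrier_vec m \<and> dz \<in> carrier_vec n \<and>
      Kb *\<^sub>v (subvec dx B @\<^sub>v (- dy)) = - (dx $ l \<cdot>\<^sub>v c) \<and>
      dz $ l = a * dx $ l + c \<bullet> (subvec dx B @\<^sub>v (- dy))"
  proof -
    fix dx dy dz assume S: "sys H A M B N dx dy dz"
    have dx: "dx \<in> carrier_vec n" and dy: "dy \<in> carrier_vec m" and dz: "dz \<in> carrier_vec n"
      using S H M unfolding sys_def by auto
    have cxB: "subvec dx B \<in> carrier_vec k" using dx by (auto intro!: carrier_vecI simp: cB k_def)
    have hB: "subvec (col H l) B \<in> carrier_vec k" using H idx(1) by (auto intro!: carrier_vecI simp: cB k_def)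
    have aL: "col A l \<in> carrier_vec m" using A idx(1) by auto
    have "c \<bullet> (subvec dx B @\<^sub>v (- dy)) = subvec (col H l) B \<bullet> subvec dx B + col A l \<bullet> (- dy)"
      unfolding c_def KB_col_def by (rule scalar_prod_append[OF hB aL cxB], insert dy, simp)
    also have "col A l \<bullet> (- dy) = - (col A l \<bullet> dy)" by (rule scalar_prod_uminus_right, insert aL dy dims, simp)
    finally have e: "c \<bullet> (subvec dx B @\<^sub>v (- dy)) = subvec (col H l) B \<bullet> subvec dx B - col A l \<bullet> dy" by simp
    show "?thesis dx dy dz"
      using cxB dx dy dz core(1)[OF H(1) M(1) A idx S] core2(1)[OF H(1,2) M(1) A idx S] e
      unfolding Kb_def c_def a_def by simp
  qed
  have part1: "\<forall>dx dy dz. sys H A M B N dx dy dz \<and> dx $ l = 0 \<longrightarrow>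
        subvec dx B = 0\<^sub>v (card B) \<and> dy = 0\<^sub>v m \<and> dz $ l = 0 \<and> subvec dz N = 0\<^sub>v (card N)"
  proof (intro allI impI)
    fix dx dy dz assume h: "sys H A M B N dx dy dz \<and> dx $ l = 0"
    have u: "subvec dx B = subvec (0\<^sub>v n) B \<and> dy = 0\<^sub>v m \<and> dz = 0\<^sub>v n"
      by (rule uniq[OF H(1) M(1) A idx KBns _ S0], insert h idx(1), auto)
    show "subvec dx B = 0\<^sub>v (card B) \<and> dy = 0\<^sub>v m \<and> dz $ l = 0 \<and> subvec dz N = 0\<^sub>v (card N)"
      using u sub0[OF Bsub(1)] sub0[OF Bsub(2)] idx(1) by simp
  qed
  have part2a: "\<And>t. \<forall>dx dy dz dx' dy' dz'. sys H A M B N dx dy dz \<and> dx $ l = t \<and>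
            sys H A M B N dx' dy' dz' \<and> dx' $ l = t \<longrightarrow>
          subvec dx B = subvec dx' B \<and> dy = dy' \<and> dz $ l = dz' $ l \<and> subvec dz N = subvec dz' N"
  proof (intro allI impI)
    fix t dx dy dz dx' dy' dz'
    assume h: "sys H A M B N dx dy dz \<and> dx $ l = t \<and> sys H A M B N dx' dy' dz' \<and> dx' $ l = t"
    have u: "subvec dx B = subvec dx' B \<and> dy = dy' \<and> dz = dz'"
      by (rule uniq[OF H(1) M(1) A idx KBns], insert h, auto)
    thus "subvec dx B = subvec dx' B \<and> dy = dy' \<and> dz $ l = dz' $ l \<and> subvec dz N = subvec dz' N" by simp
  qed
  have part2b: "KB H A M B *\<^sub>v (subvec dx B @\<^sub>v (- dy)) = - (t \<cdot>\<^sub>v KB_col H A B l)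
        \<and> dz $ l = H $$ (l, l) * t + subvec (col H l) B \<bullet> subvec dx B - col A l \<bullet> dy
        \<and> subvec dz N = t \<cdot>\<^sub>v subvec (col H l) N
                         + (submatrix H B N)\<^sup>T *\<^sub>v subvec dx B
                         - (cols_sub A N)\<^sup>T *\<^sub>v dy
        \<and> ((invertible_mat (Kl H A M B l) \<and> dz $ l > 0)
           \<or> (\<not> invertible_mat (Kl H A M B l) \<and> dz $ l = 0
              \<and> dy = 0\<^sub>v m \<and> subvec dz N = 0\<^sub>v (card N)
              \<and> order 0 (char_poly (Kl H A M B l)) = 1
              \<and> eigenvector (Kl H A M B l) (vec 1 (\<lambda>_. t) @\<^sub>v subvec dx B @\<^sub>v 0\<^sub>v m) 0))"
    if t: "t > 0" and h: "sys H A M B N dx dy dz \<and> dx $ l = t" for t :: real and dx dy dz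
  proof -
    from h have S: "sys H A M B N dx dy dz" and tl: "dx $ l = t" by auto
    note so = sol[OF S]
    have cxB: "subvec dx B \<in> carrier_vec k" and dx: "dx \<in> carrier_vec n" and dy: "dy \<in> carrier_vec m"
      and dz: "dz \<in> carrier_vec n" using so by auto
    define z0 where "z0 = subvec dx B @\<^sub>v (- dy)"
    have cz0: "z0 \<in> carrier_vec (k + m)" unfolding z0_def using cxB dy by auto
    have C1: "Kb *\<^sub>v z0 = - (t \<cdot>\<^sub>v c)" using so tl unfolding z0_def by simp
    have dzc: "dz $ l = a * t + c \<bullet> z0" using so tl unfolding z0_def by simp
    have g1: "KB H A M B *\<^sub>v (subvec dx B @\<^sub>v - dy) = - (t \<cdot>\<^sub>v KB_col H A B l)"
      using C1 unfolding Kb_def z0_def c_def .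
    have g2: "dz $ l = H $$ (l, l) * t + subvec (col H l) B \<bullet> subvec dx B - col A l \<bullet> dy"
      using core2(1)[OF H(1,2) M(1) A idx S] tl by simp
    have g3: "subvec dz N = t \<cdot>\<^sub>v subvec (col H l) N + (submatrix H B N)\<^sup>T *\<^sub>v subvec dx B - (cols_sub A N)\<^sup>T *\<^sub>v dy"
      using core2(2)[OF H(1,2) M(1) A idx S] tl by simp
    have energy: "t * dz $ l = dx \<bullet> (H *\<^sub>v dx) + dy \<bullet> (M *\<^sub>v dy)"
      using core2(3)[OF H(1,2) M(1) A idx S] tl by simp
    have pH: "dx \<bullet> (H *\<^sub>v dx) \<ge> 0" using H(3) dx dims unfolding psd_def by auto
    have pM: "dy \<bullet> (M *\<^sub>v dy) \<ge> 0" using M(3) dy dims unfolding psd_def by auto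
    have dz0: "dz $ l \<ge> 0"
    proof -
      have "t * dz $ l \<ge> 0" using energy pH pM by simp
      thus ?thesis using t by (simp add: zero_le_mult_iff)
    qed
    have g4: "(invertible_mat (Kl H A M B l) \<and> 0 < dz $ l) \<or>
          (\<not> invertible_mat (Kl H A M B l) \<and> dz $ l = 0 \<and> dy = 0\<^sub>v m \<and> subvec dz N = 0\<^sub>v (card N) \<and>
           order 0 (char_poly (Kl H A M B l)) = 1 \<and>
           eigenvector (Kl H A M B l) (vec 1 (\<lambda>_. t) @\<^sub>v subvec dx B @\<^sub>v 0\<^sub>v m) 0)"
    proof (cases "dz $ l > 0")
      case True
      have "invertible_mat (Kl H A M B l)"
        unfolding invertible_iff_ker[OF cKl]
      proof (intro ballI impI)
        fix v assume v: "v \<in> carrier_vec (1 + (k + m))" and z: "Kl H A M B l *\<^sub>v v = 0\<^sub>v (1 + (k + m))"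
        define s where "s = v $ 0"
        define u where "u = vec_last v (k + m)"
        have cu: "u \<in> carrier_vec (k + m)" unfolding u_def by simp
        have vf: "vec_first v 1 = vec 1 (\<lambda>_. s)" unfolding s_def vec_first_def by (rule eq_vecI) auto
        have vsplit: "v = vec 1 (\<lambda>_. s) @\<^sub>v u" using vec_first_last_append[OF v] unfolding vf u_def by simp
        have "Kl H A M B l *\<^sub>v v = vec 1 (\<lambda>_. a * s + c \<bullet> u) @\<^sub>v (s \<cdot>\<^sub>v c + Kb *\<^sub>v u)"
          unfolding KlE vsplit by (rule Klabs_mult[OF cKB cc cu])
        hence zz: "vec 1 (\<lambda>_. a * s + c \<bullet> u) @\<^sub>v (s \<cdot>\<^sub>v c + Kb *\<^sub>v u) = 0\<^sub>v 1 @\<^sub>v 0\<^sub>v (k + m)"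
          using z zero_append[of 1 "k+m"] by simp
        have c1: "vec 1 (\<lambda>_. a * s + c \<bullet> u) = 0\<^sub>v 1" and c2: "s \<cdot>\<^sub>v c + Kb *\<^sub>v u = 0\<^sub>v (k + m)"
          using append_vec_eq[of "vec 1 (\<lambda>_. a * s + c \<bullet> u)" 1 "0\<^sub>v 1"] zz by auto
        have e1: "a * s + c \<bullet> u = 0"
        proof -
          have "vec 1 (\<lambda>_. a * s + c \<bullet> u) $ 0 = 0\<^sub>v 1 $ 0" using c1 by simp
          thus ?thesis by simp
        qed
        have Ku: "Kb *\<^sub>v u = - (s \<cdot>\<^sub>v c)"
        proof (rule eq_vecI)
          fix i assume "i < dim_vec (- (s \<cdot>\<^sub>v c))"
          hence i: "i < k + m" using dimc by simp
          have "(s \<cdot>\<^sub>v c + Kb *\<^sub>v u) $ i = 0" using c2 i by simp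
          thus "(Kb *\<^sub>v u) $ i = (- (s \<cdot>\<^sub>v c)) $ i" using i cKB dimc by simp
        qed (insert cKB dimc, simp)
        have "Kb *\<^sub>v (t \<cdot>\<^sub>v u - s \<cdot>\<^sub>v z0) = t \<cdot>\<^sub>v (Kb *\<^sub>v u) - s \<cdot>\<^sub>v (Kb *\<^sub>v z0)"
          using mult_minus_distrib_mat_vec[OF cKB _ _, of "t \<cdot>\<^sub>v u" "s \<cdot>\<^sub>v z0"] cu cz0
            mult_mat_vec[OF cKB cu] mult_mat_vec[OF cKB cz0] by simp
        also have "\<dots> = 0\<^sub>v (k + m)" unfolding Ku C1 by (rule eq_vecI, insert dimc, auto)
        finally have "t \<cdot>\<^sub>v u - s \<cdot>\<^sub>v z0 = 0\<^sub>v (k + m)" using ker cu cz0 by auto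
        hence tu: "t \<cdot>\<^sub>v u = s \<cdot>\<^sub>v z0" by (rule vec_minus_zero) (insert cu cz0, auto)
        have "t * (c \<bullet> u) = c \<bullet> (t \<cdot>\<^sub>v u)" using scalar_prod_smult_distrib[OF cc cu] by simp
        also have "\<dots> = s * (c \<bullet> z0)" unfolding tu using scalar_prod_smult_distrib[OF cc cz0] by simp
        finally have "t * (c \<bullet> u) = s * (c \<bullet> z0)" .
        hence "0 = t * (a * s + c \<bullet> u)" using e1 by simp
        also have "\<dots> = s * (a * t + c \<bullet> z0)" using \<open>t * (c \<bullet> u) = s * (c \<bullet> z0)\<close> by (simp add: algebra_simps)
        also have "\<dots> = s * dz $ l" using dzc by simp
        finally have "s = 0" using True by simp
        hence "Kb *\<^sub>v u = 0\<^sub>v (k + m)" unfolding Ku by (intro eq_vecI, insert dimc, auto)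
        hence "u = 0\<^sub>v (k + m)" using ker cu by auto
        thus "v = 0\<^sub>v (1 + (k + m))" unfolding vsplit using \<open>s = 0\<close> by (intro eq_vecI) auto
      qed
      thus ?thesis using True by simp
    next
      case False
      hence dzl: "dz $ l = 0" using dz0 by simp
      have "dx \<bullet> (H *\<^sub>v dx) + dy \<bullet> (M *\<^sub>v dy) = 0" using energy dzl by simp
      hence qH: "dx \<bullet> (H *\<^sub>v dx) = 0" and qM: "dy \<bullet> (M *\<^sub>v dy) = 0" using pH pM by auto
      have Hx: "H *\<^sub>v dx = 0\<^sub>v n" by (rule psd_zero[OF H dx qH])
      have My: "M *\<^sub>v dy = 0\<^sub>v m" by (rule psd_zero[OF M dy qM])
      have eq2: "A *\<^sub>v dx + M *\<^sub>v dy = 0\<^sub>v m" and xN: "\<forall>i\<in>N. dx $ i = 0"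
        using S dims unfolding sys_def by auto
      have Ax: "A *\<^sub>v dx = 0\<^sub>v m"
      proof (rule eq_vecI)
        fix r assume "r < dim_vec (0\<^sub>v m :: real vec)"
        hence r: "r < m" by simp
        have "(A *\<^sub>v dx + M *\<^sub>v dy) $ r = 0" using eq2 r by simp
        moreover have "(M *\<^sub>v dy) $ r = 0" using My r by simp
        ultimately show "(A *\<^sub>v dx) $ r = 0\<^sub>v m $ r" using r A M dx dy by simp
      qed (insert A, simp)
      have S1: "sys H A M B N dx (0\<^sub>v m) (0\<^sub>v n)"
        unfolding sys_def
      proof (intro conjI)
        show "H *\<^sub>v dx - A\<^sup>T *\<^sub>v 0\<^sub>v m - 0\<^sub>v n = 0\<^sub>v (dim_col H)"
          unfolding Hx using A H by (intro eq_vecI) auto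
        show "A *\<^sub>v dx + M *\<^sub>v 0\<^sub>v m = 0\<^sub>v (dim_row M)"
          unfolding Ax using M by (intro eq_vecI) auto
      qed (insert xN dx H M Bsub, auto)
      have u: "subvec dx B = subvec dx B \<and> dy = 0\<^sub>v m \<and> dz = 0\<^sub>v n"
        by (rule uniq[OF H(1) M(1) A idx KBns S S1 refl])
      hence dy0: "dy = 0\<^sub>v m" and dzz: "dz = 0\<^sub>v n" by auto
      have zN: "subvec dz N = 0\<^sub>v (card N)" unfolding dzz by (rule sub0[OF Bsub(2)])
      have mdy: "- dy = 0\<^sub>v m" unfolding dy0 by (intro eq_vecI) auto
      have z0e: "z0 = subvec dx B @\<^sub>v 0\<^sub>v m" unfolding z0_def mdy ..
      define v0 where "v0 = vec 1 (\<lambda>_. t) @\<^sub>v subvec dx B @\<^sub>v 0\<^sub>v m"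
      have v0e: "v0 = vec 1 (\<lambda>_. t) @\<^sub>v z0" unfolding v0_def z0e ..
      have cv0: "v0 \<in> carrier_vec (1 + (k + m))" unfolding v0e
        by (rule append_carrier_vec[OF _ cz0]) auto
      have v0nz: "v0 \<noteq> 0\<^sub>v (1 + (k + m))"
      proof
        assume "v0 = 0\<^sub>v (1 + (k + m))"
        hence "v0 $ 0 = 0" by simp
        moreover have "v0 $ 0 = t" unfolding v0e by simp
        ultimately show False using t by simp
      qed
      have Kv0: "Kl H A M B l *\<^sub>v v0 = 0\<^sub>v (1 + (k + m))"
      proof -
        have "Kl H A M B l *\<^sub>v v0 = vec 1 (\<lambda>_. a * t + c \<bullet> z0) @\<^sub>v (t \<cdot>\<^sub>v c + Kb *\<^sub>v z0)"
          unfolding KlE v0e by (rule Klabs_mult[OF cKB cc cz0])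
        also have "\<dots> = 0\<^sub>v (1 + (k + m))" unfolding C1 dzc[symmetric] dzl
          by (rule eq_vecI, insert dimc, auto)
        finally show ?thesis .
      qed
      have ninv: "\<not> invertible_mat (Kl H A M B l)"
        unfolding invertible_iff_ker[OF cKl] using cv0 v0nz Kv0 by blast
      have eig: "eigenvector (Kl H A M B l) v0 0"
        unfolding eigenvector_def using cv0 v0nz Kv0 cKl smult_zero_vec'[OF cv0] by auto
      define w where "w = (1 / t) \<cdot>\<^sub>v z0"
      have cw: "w \<in> carrier_vec (k + m)" unfolding w_def using cz0 by simp
      have Kw: "Kb *\<^sub>v w = - c"
      proof -
        have "Kb *\<^sub>v w = (1 / t) \<cdot>\<^sub>v (Kb *\<^sub>v z0)" unfolding w_def by (rule mult_mat_vec[OF cKB cz0])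
        also have "\<dots> = - c" unfolding C1 using t by (intro eq_vecI, insert dimc, auto)
        finally show ?thesis .
      qed
      have aw: "a + c \<bullet> w = 0"
      proof -
        have "c \<bullet> w = (1 / t) * (c \<bullet> z0)" unfolding w_def by (rule scalar_prod_smult_distrib[OF cc cz0])
        moreover have "c \<bullet> z0 = - (a * t)" using dzc dzl by simp
        ultimately show ?thesis using t by simp
      qed
      have ord: "order 0 (char_poly (Kl H A M B l)) = 1"
        unfolding KlE by (rule order_lemma[OF cKB Ksym _ cc cw Kw aw], insert ker, auto)
      show ?thesis using ninv dzl dy0 zN ord eig unfolding v0_def by simp
    qed
    show ?thesis using g1 g2 g3 g4 by blast
  qed
  show ?thesis using part1 part2a part2b by blast
qed

end
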